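(* Let $G=(V,E,w)$ be a transitive DAG with nonnegative vertex weights, let $U\subseteq V$ be nonempty and let $d\ge \frac12|U|$. Then there exists a vertex $v\in U_d$ with $r_U(v)=\mathrm{opt}(U)$. In particular $\max_{v\in U_d} r_U(v)=\mathrm{opt}(U)$.
   Context: A DAG $G=(V,E)$ is transitive if $(v_1,v_2),(v_2,v_3)\in E$ implies $(v_1,v_3)\in E$. A chain is a set of vertices any two distinct members of which are joined by an edge; its weight is the sum of the weights of its vertices. For $U\subseteq V$, $\mathrm{opt}(U)$ is the maximum weight of a chain contained in $U$. For $v\in U$, $r_U(v)$ is the maximum weight of a chain contained in $U$ that contains $v$; $U_{-v}=\{u\in U:(u,v)\in E\}$ and $U_{+v}=\{u\in U:(v,u)\in E\}$; and for a real $d$, $U_d=\{v\in U:\max(|U_{-v}|,|U_{+v}|)\le d\}$. *)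

theory Defs
  imports Complex_Main
begin

definition dag :: "'a set \<Rightarrow> ('a \<times> 'a) set \<Rightarrow> bool" where
  "dag V E \<longleftrightarrow> finite V \<and> E \<subseteq> V \<times> V \<and> acyclic E"

definition transitive_dag :: "'a set \<Rightarrow> ('a \<times> 'a) set \<Rightarrow> bool" where
  "transitive_dag V E \<longleftrightarrow> dag V E \<and>
     (\<forall>v1 v2 v3. (v1, v2) \<in> E \<and> (v2, v3) \<in> E \<longrightarrow> (v1, v3) \<in> E)"

definition is_chain :: "('a \<times> 'a) set \<Rightarrow> 'a set \<Rightarrow> bool" where
  "is_chain E C \<longleftrightarrow> (\<forall>a\<in>C. \<forall>b\<in>C. a \<noteq> b \<longrightarrow> (a, b) \<in> E \<or> (b, a) \<in> E)"

definition chain_weight :: "('a \<Rightarrow> real) \<Rightarrow> 'a set \<Rightarrow> real" where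
  "chain_weight w C = (\<Sum>v\<in>C. w v)"

definition opt :: "('a \<times> 'a) set \<Rightarrow> ('a \<Rightarrow> real) \<Rightarrow> 'a set \<Rightarrow> real" where
  "opt E w U = Max {chain_weight w C | C. C \<subseteq> U \<and> is_chain E C}"

definition rU :: "('a \<times> 'a) set \<Rightarrow> ('a \<Rightarrow> real) \<Rightarrow> 'a set \<Rightarrow> 'a \<Rightarrow> real" where
  "rU E w U v = Max {chain_weight w C | C. C \<subseteq> U \<and> is_chain E C \<and> v \<in> C}"

definition U_minus :: "('a \<times> 'a) set \<Rightarrow> 'a set \<Rightarrow> 'a \<Rightarrow> 'a set" where
  "U_minus E U v = {u \<in> U. (u, v) \<in> E}"

definition U_plus :: "('a \<times> 'a) set \<Rightarrow> 'a set \<Rightarrow> 'a \<Rightarrow> 'a set" where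
  "U_plus E U v = {u \<in> U. (v, u) \<in> E}"

definition U_d :: "('a \<times> 'a) set \<Rightarrow> 'a set \<Rightarrow> real \<Rightarrow> 'a set" where
  "U_d E U d = {v \<in> U. real (max (card (U_minus E U v)) (card (U_plus E U v))) \<le> d}"

end

theory Submission
  imports Defs
begin

lemma ex_argmax:
  fixes f :: "'b \<Rightarrow> 'c::linorder"
  assumes "finite S" "S \<noteq> {}"
  shows "\<exists>x\<in>S. \<forall>y\<in>S. f y \<le> f x"
proof -
  have "Max (f ` S) \<in> f ` S" using assms by simp
  then obtain x where "x \<in> S" "f x = Max (f ` S)" by auto
  thus ?thesis using assms by (metis Max_ge finite_imageI imageI)
qed

lemma ex_argmin:
  fixes f :: "'b \<Rightarrow> 'c::linorder"
  assumes "finite S" "S \<noteq> {}"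
  shows "\<exists>x\<in>S. \<forall>y\<in>S. f x \<le> f y"
proof -
  have "Min (f ` S) \<in> f ` S" using assms by simp
  then obtain x where "x \<in> S" "f x = Min (f ` S)" by auto
  thus ?thesis using assms by (metis Min_le finite_imageI imageI)
qed

theorem mainTheorem2:
  fixes V :: "'a set" and E :: "('a \<times> 'a) set" and w :: "'a \<Rightarrow> real"
    and U :: "'a set" and d :: real
  assumes "transitive_dag V E"
    and "\<forall>v\<in>V. w v \<ge> 0"
    and "U \<subseteq> V" and "U \<noteq> {}"
    and "d \<ge> real (card U) / 2"
  shows "(\<exists>v\<in>U_d E U d. rU E w U v = opt E w U)
         \<and> U_d E U d \<noteq> {} \<and> Max (rU E w U ` U_d E U d) = opt E w U"
proof -
  have finV: "finite V" and EV: "E \<subseteq> V \<times> V" and acy: "acyclic E"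
    and T: "\<And>a b c. (a,b) \<in> E \<Longrightarrow> (b,c) \<in> E \<Longrightarrow> (a,c) \<in> E"
    using assms(1) unfolding transitive_dag_def dag_def by blast+
  have irr: "\<And>x. (x,x) \<notin> E" using acy unfolding acyclic_def by auto
  have asym: "\<And>x y. (x,y) \<in> E \<Longrightarrow> (y,x) \<notin> E" using T irr by blast
  have finU: "finite U" using finV assms(3) finite_subset by blast
  have wnn: "\<And>u. u \<in> U \<Longrightarrow> w u \<ge> 0" using assms(2,3) by blast
  define Ch where "Ch = {C. C \<subseteq> U \<and> is_chain E C}"
  have finCh: "finite Ch" unfolding Ch_def using finU by simp
  have emCh: "{} \<in> Ch" unfolding Ch_def is_chain_def by simp
  have optdef: "opt E w U = Max (chain_weight w ` Ch)"
    unfolding opt_def Ch_def by (simp add: image_def) (metis)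
  have opt_ge: "\<And>C. C \<in> Ch \<Longrightarrow> chain_weight w C \<le> opt E w U"
    unfolding optdef using finCh by simp
  obtain C0 where C0: "C0 \<in> Ch" "chain_weight w C0 = opt E w U"
    unfolding optdef using finCh emCh
    by (metis (no_types, lifting) Max_in empty_iff finite_imageI image_iff image_is_empty)
  define Opt where "Opt = {C \<in> Ch. chain_weight w C = opt E w U}"
  have "finite Opt" "Opt \<noteq> {}" unfolding Opt_def using finCh C0 by auto
  then obtain D where D: "D \<in> Opt" and Dmax: "\<And>C. C \<in> Opt \<Longrightarrow> card C \<le> card D"
    using ex_argmax[of Opt card] by blast
  have DU: "D \<subseteq> U" and Dch: "is_chain E D" and Dw: "chain_weight w D = opt E w U"
    using D unfolding Opt_def Ch_def by auto
  have finD: "finite D" using DU finU finite_subset by blast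
  have ext: False if u: "u \<in> U" "u \<notin> D" and rel: "\<And>c. c \<in> D \<Longrightarrow> (c,u) \<in> E \<or> (u,c) \<in> E" for u
  proof -
    have ch: "is_chain E (insert u D)" using Dch rel unfolding is_chain_def by blast
    hence inCh: "insert u D \<in> Ch" unfolding Ch_def using u DU by auto
    have "chain_weight w (insert u D) = w u + chain_weight w D"
      unfolding chain_weight_def using finD u by simp
    hence "chain_weight w (insert u D) \<ge> opt E w U" using wnn[OF u(1)] Dw by simp
    hence "insert u D \<in> Opt" using opt_ge[OF inCh] inCh unfolding Opt_def by simp
    hence "card (insert u D) \<le> card D" using Dmax by blast
    thus False using finD u by simp
  qed
  define a where "a x = card (U_minus E U x)" for x
  define b where "b x = card (U_plus E U x)" for x
  have amono: "a x < a y" if "(x,y) \<in> E" "x \<in> U" for x y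
  proof -
    have "U_minus E U x \<subseteq> U_minus E U y" unfolding U_minus_def using T that by blast
    moreover have "x \<in> U_minus E U y" "x \<notin> U_minus E U x" unfolding U_minus_def using that irr by auto
    ultimately have "U_minus E U x \<subset> U_minus E U y" by blast
    moreover have "finite (U_minus E U y)" unfolding U_minus_def using finU by simp
    ultimately show ?thesis unfolding a_def by (simp add: psubset_card_mono)
  qed
  have Dne: "D \<noteq> {}"
  proof
    assume "D = {}"
    obtain u where "u \<in> U" using assms(4) by blast
    thus False using ext[of u] \<open>D = {}\<close> by blast
  qed
  obtain m where m: "m \<in> D" "\<And>y. y \<in> D \<Longrightarrow> a m \<le> a y"
    using ex_argmin[OF finD Dne, of a] by blast
  have "U_minus E U m = {}"
  proof (rule ccontr)
    assume "U_minus E U m \<noteq> {}"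
    then obtain u where u: "u \<in> U" "(u,m) \<in> E" unfolding U_minus_def by blast
    have "u \<notin> D" using m amono[OF u(2) u(1)] by fastforce
    moreover have "(c,u) \<in> E \<or> (u,c) \<in> E" if "c \<in> D" for c
    proof -
      have "c = m \<or> (c,m) \<in> E \<or> (m,c) \<in> E" using Dch that m(1) unfolding is_chain_def by blast
      moreover have "(c,m) \<notin> E" using amono[of c m] m that DU by fastforce
      ultimately show ?thesis using u T by blast
    qed
    ultimately show False using ext u by blast
  qed
  hence am: "a m = 0" unfolding a_def by simp
  define S where "S = {c \<in> D. real (a c) \<le> d}"
  have "finite S" "S \<noteq> {}" unfolding S_def using finD m am assms(5) by auto
  then obtain v where vS: "v \<in> S" and vmax: "\<And>y. y \<in> S \<Longrightarrow> a y \<le> a v"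
    using ex_argmax[of S a] by blast
  have vD: "v \<in> D" and va: "real (a v) \<le> d" using vS unfolding S_def by auto
  have vU: "v \<in> U" using vD DU by blast
  have vb: "real (b v) \<le> d"
  proof (rule ccontr)
    assume bv: "\<not> real (b v) \<le> d"
    have "D \<inter> U_plus E U v \<noteq> {}"
    proof
      assume emp: "D \<inter> U_plus E U v = {}"
      have "real (card U) / 2 \<ge> 0" by simp
      hence "b v > 0" using bv assms(5) by linarith
      hence "U_plus E U v \<noteq> {}" unfolding b_def by (metis card.empty less_irrefl)
      then obtain u where u: "u \<in> U" "(v,u) \<in> E" unfolding U_plus_def by blast
      have "u \<notin> D" using emp u unfolding U_plus_def by blast
      moreover have "(c,u) \<in> E \<or> (u,c) \<in> E" if "c \<in> D" for c
      proof -
        have "c = v \<or> (c,v) \<in> E \<or> (v,c) \<in> E" using Dch that vD unfolding is_chain_def by blast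
        moreover have "(v,c) \<notin> E" using emp that DU unfolding U_plus_def by blast
        ultimately show ?thesis using u T by blast
      qed
      ultimately show False using ext u by blast
    qed
    moreover have "finite (D \<inter> U_plus E U v)" using finD by simp
    ultimately obtain v' where v'1: "v' \<in> D \<inter> U_plus E U v"
      and v'min: "\<And>y. y \<in> D \<inter> U_plus E U v \<Longrightarrow> a v' \<le> a y"
      using ex_argmin[of "D \<inter> U_plus E U v" a] by blast
    have v'D: "v' \<in> D" and vv': "(v,v') \<in> E" using v'1 unfolding U_plus_def by auto
    have "a v < a v'" using amono[OF vv' vU] .
    hence av': "real (a v') > d" using vmax[of v'] v'D unfolding S_def by force
    have disj: "U_plus E U v \<inter> U_minus E U v' = {}"
    proof (rule ccontr)
      assume "U_plus E U v \<inter> U_minus E U v' \<noteq> {}"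
      then obtain u where u: "u \<in> U" "(v,u) \<in> E" "(u,v') \<in> E"
        unfolding U_plus_def U_minus_def by blast
      have "u \<notin> D"
      proof
        assume "u \<in> D"
        hence "a v' \<le> a u" using v'min u unfolding U_plus_def by blast
        thus False using amono[OF u(3) u(1)] by simp
      qed
      moreover have "(c,u) \<in> E \<or> (u,c) \<in> E" if cD: "c \<in> D" for c
      proof -
        have "c = v \<or> (c,v) \<in> E \<or> (v,c) \<in> E" using Dch cD vD unfolding is_chain_def by blast
        moreover have "(u,c) \<in> E" if vc: "(v,c) \<in> E"
        proof -
          have cP: "c \<in> D \<inter> U_plus E U v" using cD vc DU unfolding U_plus_def by blast
          hence le: "a v' \<le> a c" using v'min by blast
          have "c = v' \<or> (c,v') \<in> E \<or> (v',c) \<in> E" using Dch cD v'D unfolding is_chain_def by blast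
          moreover have "(c,v') \<notin> E" using amono[of c v'] le cD DU by fastforce
          ultimately show ?thesis using u T by blast
        qed
        ultimately show ?thesis using u T by blast
      qed
      ultimately show False using ext u by blast
    qed
    have "U_plus E U v \<union> U_minus E U v' \<subseteq> U" unfolding U_plus_def U_minus_def by auto
    hence "card (U_plus E U v \<union> U_minus E U v') \<le> card U" using finU card_mono by blast
    moreover have "card (U_plus E U v \<union> U_minus E U v') = b v + a v'"
      unfolding a_def b_def using disj finU
      by (subst card_Un_disjoint) (auto simp: U_plus_def U_minus_def)
    ultimately have "real (b v) + real (a v') \<le> real (card U)" by linarith
    thus False using bv av' assms(5) by linarith
  qed
  have vUd: "v \<in> U_d E U d" unfolding U_d_def using vU va vb a_def b_def by simp
  have rU_le: "rU E w U x \<le> opt E w U" if "x \<in> U" for x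
  proof -
    have "{chain_weight w C | C. C \<subseteq> U \<and> is_chain E C \<and> x \<in> C} \<subseteq> chain_weight w ` Ch"
      unfolding Ch_def by auto
    moreover have "{x} \<subseteq> U \<and> is_chain E {x} \<and> x \<in> {x}" using that unfolding is_chain_def by auto
    hence "{chain_weight w C | C. C \<subseteq> U \<and> is_chain E C \<and> x \<in> C} \<noteq> {}" by blast
    ultimately show ?thesis unfolding rU_def optdef using finCh by (simp add: Max_mono)
  qed
  have rv: "rU E w U v = opt E w U"
  proof (rule antisym)
    show "rU E w U v \<le> opt E w U" using rU_le vU .
    have m1: "chain_weight w D \<in> {chain_weight w C | C. C \<subseteq> U \<and> is_chain E C \<and> v \<in> C}"
      using DU Dch vD by blast
    have m2: "finite {chain_weight w C | C. C \<subseteq> U \<and> is_chain E C \<and> v \<in> C}"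
    proof -
      have "{chain_weight w C | C. C \<subseteq> U \<and> is_chain E C \<and> v \<in> C} \<subseteq> chain_weight w ` Ch"
        unfolding Ch_def by auto
      thus ?thesis using finCh finite_subset by blast
    qed
    have "chain_weight w D \<le> Max {chain_weight w C | C. C \<subseteq> U \<and> is_chain E C \<and> v \<in> C}"
      using Max_ge[OF m2 m1] .
    thus "opt E w U \<le> rU E w U v" unfolding rU_def using Dw by simp
  qed
  have Udsub: "U_d E U d \<subseteq> U" unfolding U_d_def by auto
  have finUd: "finite (U_d E U d)" using finU Udsub finite_subset by blast
  have img: "opt E w U \<in> rU E w U ` U_d E U d" using vUd rv by (metis imageI)
  have "Max (rU E w U ` U_d E U d) = opt E w U"
    by (rule Max_eqI) (use finUd img rU_le Udsub in auto)
  thus ?thesis using vUd rv by blast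
qed

end
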